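(* Let $f(z)=z+\sum_{k=2}^{\infty}a_kz^k$ be analytic in $\mathbb{D}=\{z:|z|<1\}$ with $zf'(z)-f(z)=\frac12 z^2\phi(z)$ for all $z\in\mathbb{D}$, where $\phi$ is analytic in $\mathbb{D}$ and $|\phi(z)|\le1$. Let $r_{\mathcal S}$ denote the positive root (in $(0,1)$) of \[(1-r)\ln(1-r)+2-3r=0.\] Then for every $n\ge2$ the partial sum $s_n(z;f)=z+\sum_{k=2}^n a_kz^k$ is close-to-convex in the disk $|z|<r_{\mathcal S}$.
   Context: A normalized analytic function $g$ is close-to-convex in a disk if there is a convex function $h$ there with $\mathrm{Re}(g'(z)/h'(z))>0$ in the disk (in particular this holds if $\mathrm{Re}\,g'(z)>0$ there). *)

theory Defs
  imports "HOL-Analysis.Analysis"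
begin

definition convex_fun_in :: "real \<Rightarrow> (complex \<Rightarrow> complex) \<Rightarrow> bool" where
  "convex_fun_in r h \<longleftrightarrow>
     h holomorphic_on ball 0 r \<and> inj_on h (ball 0 r) \<and> convex (h ` ball 0 r)"

definition close_to_convex_in :: "real \<Rightarrow> (complex \<Rightarrow> complex) \<Rightarrow> bool" where
  "close_to_convex_in r g \<longleftrightarrow>
     g holomorphic_on ball 0 r \<and> g 0 = 0 \<and> deriv g 0 = 1 \<and>
     (\<exists>h. convex_fun_in r h \<and> (\<forall>z\<in>ball 0 r. Re (deriv g z / deriv h z) > 0))"

end

theory Submission
  imports Defs "HOL-Complex_Analysis.Complex_Analysis"
begin

lemma coef_bound:
  fixes f \<phi> :: "complex \<Rightarrow> complex" and a :: "nat \<Rightarrow> complex"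
  assumes f_series: "\<And>z. norm z < 1 \<Longrightarrow> (\<lambda>k. a k * z ^ k) sums f z"
    and f_hol: "f holomorphic_on ball 0 1"
    and phi_bound: "\<And>z. norm z < 1 \<Longrightarrow> norm (\<phi> z) \<le> 1"
    and eq: "\<And>z. norm z < 1 \<Longrightarrow> z * deriv f z - f z = 1/2 * z^2 * \<phi> z"
    and k: "k \<ge> 2"
  shows "real (k - 1) * norm (a k) \<le> 1/2"
proof -
  define A where "A = Abs_fps a"
  define G where "G = (\<lambda>z. z * deriv f z - f z)"
  have fA: "f has_fps_expansion A"
  proof (rule has_fps_expansionI)
    have "eventually (\<lambda>u. u \<in> ball 0 1) (nhds (0::complex))"
      by (intro eventually_nhds_in_open) auto
    then show "\<forall>\<^sub>F u in nhds 0. (\<lambda>n. A $ n * u ^ n) sums f u"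
      by eventually_elim (auto simp: A_def f_series)
  qed
  have GA: "G has_fps_expansion fps_X * fps_deriv A - A"
    unfolding G_def by (intro fps_expansion_intros fA)
  have "(fps_X * fps_deriv A - A) $ k = of_nat (k - 1) * a k"
    using k by (cases k) (auto simp: A_def algebra_simps)
  hence ak: "of_nat (k - 1) * a k = (deriv ^^ k) G 0 / fact k"
    using fps_nth_fps_expansion[OF GA, of k] by simp
  have Ghol: "G holomorphic_on ball 0 1"
    unfolding G_def using f_hol by (intro holomorphic_intros holomorphic_deriv) auto
  define c where "c = real (k - 1) * norm (a k)"
  have bnd: "\<rho> ^ (k - 2) * c \<le> 1/2" if "0 < \<rho>" "\<rho> < 1" for \<rho> :: real
  proof -
    have "norm ((deriv ^^ k) G 0) \<le> fact k * (\<rho>^2/2) / \<rho>^k"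
    proof (rule Cauchy_inequality)
      show "G holomorphic_on ball 0 \<rho>" using Ghol that by (auto elim!: holomorphic_on_subset)
      show "continuous_on (cball 0 \<rho>) G"
        using Ghol that by (intro holomorphic_on_imp_continuous_on) (auto elim!: holomorphic_on_subset)
      show "0 < \<rho>" by fact
      fix x :: complex assume "norm (0 - x) = \<rho>"
      hence nx: "norm x = \<rho>" by simp
      have "G x = 1/2 * x^2 * \<phi> x" unfolding G_def using eq nx that by auto
      hence "norm (G x) = \<rho>^2/2 * norm (\<phi> x)" by (simp only: norm_mult norm_power nx norm_divide) simp
      also have "\<dots> \<le> \<rho>^2/2 * 1" using phi_bound[of x] nx that
        by (intro mult_left_mono) auto
      finally show "norm (G x) \<le> \<rho>^2/2" by simp
    qed
    moreover have "c = norm (of_nat (k - 1) * a k)" by (simp add: c_def norm_mult)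
    hence "c = norm ((deriv ^^ k) G 0 / fact k)" by (simp only: ak)
    hence "c = norm ((deriv ^^ k) G 0) / fact k" by (simp add: norm_divide)
    ultimately have "c \<le> (fact k * (\<rho>^2/2) / \<rho>^k) / fact k"
      by (metis divide_right_mono fact_ge_zero)
    hence "c \<le> (\<rho>^2/2) / \<rho>^k" by simp
    also have "\<rho>^k = \<rho>^2 * \<rho>^(k-2)" using k by (metis le_add_diff_inverse power_add)
    finally have "c \<le> 1 / (2 * \<rho>^(k-2))" using that by (simp add: field_simps)
    thus ?thesis using that by (simp add: field_simps mult.commute)
  qed
  have lim: "((\<lambda>\<rho>::real. \<rho> ^ (k - 2) * c) \<longlongrightarrow> 1 ^ (k - 2) * c) (at_left 1)"
    by (intro tendsto_intros)
  have ev: "eventually (\<lambda>\<rho>::real. \<rho> ^ (k - 2) * c \<le> 1/2) (at_left 1)"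
  proof -
    have "eventually (\<lambda>\<rho>::real. \<rho> \<in> {0<..<1}) (at_left 1)"
      by (rule eventually_at_left_real) simp
    thus ?thesis by eventually_elim (use bnd in simp)
  qed
  have "1 ^ (k - 2) * c \<le> 1/2"
    by (rule tendsto_upperbound[OF lim ev]) (simp add: trivial_limit_at_left_real)
  thus ?thesis by (simp add: c_def)
qed

lemma series_one:
  fixes r :: real
  assumes "0 < r" "r < 1" and root: "(1 - r) * ln (1 - r) + 2 - 3 * r = 0"
  shows "(\<lambda>k. if k \<ge> 2 then real k / (2 * real (k - 1)) * r ^ (k - 1) else 0) sums 1"
proof -
  have l: "(\<lambda>n. - ((-(-r))^n) / of_nat n) sums ln (1 + (-r))"
    by (rule ln_series') (use assms in auto)
  hence "(\<lambda>n. r ^ n / of_nat n) sums (- ln (1 - r))"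
    using sums_minus[OF l] by simp
  hence l2: "(\<lambda>n. r ^ Suc n / of_nat (Suc n)) sums (- ln (1 - r))"
    by (subst sums_Suc_iff) simp
  have g: "(\<lambda>n. r ^ Suc n) sums (r / (1 - r))"
    using sums_mult[OF geometric_sums[of r], of r] assms by (simp add: field_simps)
  have "(\<lambda>n. (r ^ Suc n + r ^ Suc n / of_nat (Suc n)) / 2) sums ((r / (1 - r) - ln (1 - r)) / 2)"
    using sums_divide[OF sums_add[OF g l2], of 2] by simp
  moreover have "(r / (1 - r) - ln (1 - r)) / 2 = 1"
  proof -
    have "ln (1 - r) = (3 * r - 2) / (1 - r)" using root assms by (simp add: field_simps)
    thus ?thesis using assms by (simp add: field_simps)
  qed
  ultimately have s: "(\<lambda>n. (r ^ Suc n + r ^ Suc n / of_nat (Suc n)) / 2) sums 1" by simp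
  have "(\<lambda>n. (\<lambda>k. if k \<ge> 2 then real k / (2 * real (k - 1)) * r ^ (k - 1) else 0) (Suc (Suc n))) sums 1"
  proof -
    have "(\<lambda>n. (\<lambda>k. if k \<ge> 2 then real k / (2 * real (k - 1)) * r ^ (k - 1) else 0) (Suc (Suc n)))
       = (\<lambda>n. (r ^ Suc n + r ^ Suc n / of_nat (Suc n)) / 2)"
      by (rule ext) (simp add: field_simps)
    with s show ?thesis by simp
  qed
  thus ?thesis
    apply (subst (asm) sums_Suc_iff[where f = "\<lambda>n. (\<lambda>k. if k \<ge> 2 then real k / (2 * real (k - 1)) * r ^ (k - 1) else 0) (Suc n)"])
    apply (subst (asm) sums_Suc_iff)
    by simp
qed

theorem theorem2p3:
  fixes f \<phi> :: "complex \<Rightarrow> complex" and a :: "nat \<Rightarrow> complex" and rS :: real and n :: nat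
  assumes a0: "a 0 = 0" and a1: "a 1 = 1"
    and f_series: "\<And>z. norm z < 1 \<Longrightarrow> (\<lambda>k. a k * z ^ k) sums f z"
    and f_hol: "f holomorphic_on ball 0 1"
    and phi_hol: "\<phi> holomorphic_on ball 0 1"
    and phi_bound: "\<And>z. norm z < 1 \<Longrightarrow> norm (\<phi> z) \<le> 1"
    and eq: "\<And>z. norm z < 1 \<Longrightarrow> z * deriv f z - f z = 1/2 * z^2 * \<phi> z"
    and rS_pos: "0 < rS" and rS_lt1: "rS < 1"
    and rS_root: "(1 - rS) * ln (1 - rS) + 2 - 3 * rS = 0"
    and n: "n \<ge> 2"
  shows "close_to_convex_in rS (\<lambda>z. z + (\<Sum>k=2..n. a k * z ^ k))"
proof -
  define D where "D = (\<lambda>z. 1 + (\<Sum>k=2..n. of_nat k * a k * z ^ (k - 1)))"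
  have der: "((\<lambda>z. z + (\<Sum>k=2..n. a k * z ^ k)) has_field_derivative D z) (at z)" for z
    unfolding D_def by (auto intro!: derivative_eq_intros sum.cong simp: algebra_simps)
  hence dg: "deriv (\<lambda>z. z + (\<Sum>k=2..n. a k * z ^ k)) z = D z" for z
    by (rule DERIV_imp_deriv)
  have hol: "(\<lambda>z. z + (\<Sum>k=2..n. a k * z ^ k)) holomorphic_on ball 0 rS"
    by (intro holomorphic_intros)
  have g0: "(\<lambda>z. z + (\<Sum>k=2..n. a k * z ^ k)) 0 = 0"
    by (auto intro!: sum.neutral)
  have dg0: "D 0 = 1"
    unfolding D_def by (auto intro!: sum.neutral)
  define w where "w = (\<lambda>k \<rho>. real k / (2 * real (k - 1)) * \<rho> ^ (k - 1))"
  define v where "v = (\<lambda>k. if k \<ge> 2 then real k / (2 * real (k - 1)) * rS ^ (k - 1) else 0)"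
  have vs: "v sums 1" unfolding v_def by (rule series_one) (use rS_pos rS_lt1 rS_root in auto)
  have ak: "k * norm (a k) \<le> real k / (2 * real (k - 1))" if "k \<ge> 2" for k
  proof -
    have "real (k - 1) * norm (a k) \<le> 1/2"
      by (rule coef_bound[OF f_series f_hol phi_bound eq that]) auto
    moreover have "real (k - 1) > 0" using that by simp
    ultimately have "norm (a k) \<le> 1 / (2 * real (k - 1))" by (simp add: field_simps)
    from mult_left_mono[OF this, of "real k"] show ?thesis by simp
  qed
  have pos: "Re (D z) > 0" if z: "z \<in> ball 0 rS" for z
  proof -
    define t where "t = norm z"
    have t: "0 \<le> t" "t < rS" using z by (auto simp: t_def)
    have "norm (\<Sum>k=2..n. of_nat k * a k * z ^ (k - 1)) \<le> (\<Sum>k=2..n. norm (of_nat k * a k * z ^ (k - 1)))"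
      by (rule norm_sum)
    also have "\<dots> = (\<Sum>k=2..n. (k * norm (a k)) * t ^ (k - 1))"
      by (simp add: norm_mult norm_power t_def)
    also have "\<dots> \<le> (\<Sum>k=2..n. w k t)"
      unfolding w_def using ak t by (intro sum_mono mult_right_mono) auto
    also have "\<dots> < (\<Sum>k=2..n. w k rS)"
    proof (rule sum_strict_mono_ex1)
      show "\<forall>k\<in>{2..n}. w k t \<le> w k rS"
        unfolding w_def using t by (intro ballI mult_left_mono power_mono) auto
      show "\<exists>k\<in>{2..n}. w k t < w k rS"
        using n t by (intro bexI[of _ 2]) (auto simp: w_def)
    qed simp
    also have "\<dots> = (\<Sum>k\<in>{2..n}. v k)"
      by (intro sum.cong) (auto simp: v_def w_def)
    also have "\<dots> \<le> suminf v"
      using vs rS_pos by (intro sum_le_suminf) (auto simp: sums_iff v_def)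
    also have "\<dots> = 1" using vs by (simp add: sums_iff)
    finally have lt: "norm (\<Sum>k=2..n. of_nat k * a k * z ^ (k - 1)) < 1" .
    have "- Re (\<Sum>k=2..n. of_nat k * a k * z ^ (k - 1)) \<le> norm (\<Sum>k=2..n. of_nat k * a k * z ^ (k - 1))"
      using abs_Re_le_cmod by (metis abs_le_D2)
    thus ?thesis using lt unfolding D_def by simp
  qed
  show ?thesis
    unfolding close_to_convex_in_def convex_fun_in_def
  proof (intro conjI exI[of _ "\<lambda>z. z"] ballI)
    show "(\<lambda>z. z + (\<Sum>k=2..n. a k * z ^ k)) holomorphic_on ball 0 rS" by (rule hol)
    show "(\<lambda>z. z + (\<Sum>k=2..n. a k * z ^ k)) 0 = 0" by (rule g0)
    show "deriv (\<lambda>z. z + (\<Sum>k=2..n. a k * z ^ k)) 0 = 1" using dg dg0 by simp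
    show "(\<lambda>z. z) holomorphic_on ball 0 rS" by (intro holomorphic_intros)
    show "inj_on (\<lambda>z. z) (ball 0 rS)" by simp
    show "convex ((\<lambda>z. z) ` ball (0::complex) rS)" by simp
    fix z :: complex assume "z \<in> ball 0 rS"
    thus "0 < Re (deriv (\<lambda>z. z + (\<Sum>k=2..n. a k * z ^ k)) z / deriv (\<lambda>z. z) z)"
      using pos dg by simp
  qed
qed

end
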